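(* Let $\Omega$ be a metrizable separable space, $\mathcal{L}\subset\mathcal{C}_b(\Omega)$ a linear subspace which is a vector lattice, contains the constants and generates the topology, and let $\rho$ be a normalized uniformly regular convex risk measure on $\mathcal{L}$. Let $\rho_1$ be a regular sublinear risk measure on $\mathcal{L}$ with $\rho\le\rho_1$. Then: (i) $c(X)=\rho_1(-|X|)$ defines a capacity on $\mathcal{L}$; (ii) $\rho_1$ has a unique continuous extension to a sublinear risk measure $\overline{\rho_1}$ on $L^1(c)$; (iii) $\rho$ has a unique continuous extension to a normalized convex risk measure $\overline{\rho}$ on $L^1(c)$, majorized by $\overline{\rho_1}$.
   Context: A convex risk measure on $\mathcal{L}$ (resp. on $L^1(c)$) is a map $\rho$ to $\mathbb{R}$ that is monotone ($X\le Y\Rightarrow\rho(X)\ge\rho(Y)$), convex and translation invariant ($\rho(X+a)=\rho(X)-a$, $a\in\mathbb{R}$); normalized means $\rho(0)=0$; sublinear means additionally positively homogeneous. A sublinear risk measure $\rho_1$ on $\mathcal{L}$ is regular if $\rho_1(-X_n)\to0$ for every sequence $X_n\in\mathcal{L}$ decreasing pointwise to $0$. A normalized convex risk measure $\rho$ on $\mathcal{L}$ is uniformly regular if $\sup_{\lambda>0}\rho(\lambda X)/\lambda<\infty$ for all $X$, and for every sequence $X_n\in\mathcal{L}$ decreasing to $0$, $\rho(-\lambda X_n)/\lambda\to0$ uniformly in $\lambda>0$. A capacity on $\mathcal{L}$ is a seminorm $c$ with $c(f)\le c(g)$ whenever $|f|\le|g|$ and $\inf_n c(f_n)=0$ for $f_n\in\mathcal{L}$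 decreasing to $0$; extended to all functions by $c(f)=\sup\{c(\varphi):\varphi\in\mathcal{L},0\le\varphi\le f\}$ for $f\ge0$ l.s.c. and $c(g)=\inf\{c(f):f\text{ l.s.c.},f\ge|g|\}$. $L^1(c)$ is the Banach space obtained as the quotient by $c$-null elements of the $c$-closure of $\mathcal{L}$ in $\{g:c(g)<\infty\}$, ordered by: $X\ge0$ iff some $f_n\in\mathcal{L}$, $f_n\ge0$, satisfy $c(g-f_n)\to0$ for every representative $g$ of $X$. *)

theory Defs
  imports "HOL-Analysis.Analysis"
begin

definition bounded_cont :: "('a::topological_space \<Rightarrow> real) \<Rightarrow> bool" where
  "bounded_cont f \<longleftrightarrow> continuous_on UNIV f \<and> bounded (range f)"

definition decr_to_zero :: "(nat \<Rightarrow> 'a \<Rightarrow> real) \<Rightarrow> bool" where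
  "decr_to_zero Xs \<longleftrightarrow> (\<forall>n x. Xs (Suc n) x \<le> Xs n x) \<and> (\<forall>x. (\<lambda>n. Xs n x) \<longlonglongrightarrow> 0)"

definition const_fun :: "real \<Rightarrow> 'a \<Rightarrow> real" where
  "const_fun a = (\<lambda>x. a)"

text \<open>Risk measures on a set D of functions (D = L or D = the carrier of L^1(c)),
with respect to an order given by a nonnegativity predicate.\<close>

definition monotone_rm :: "('a \<Rightarrow> real) set \<Rightarrow> (('a \<Rightarrow> real) \<Rightarrow> bool) \<Rightarrow> (('a \<Rightarrow> real) \<Rightarrow> real) \<Rightarrow> bool" where
  "monotone_rm D nonneg \<rho> \<longleftrightarrow> (\<forall>X\<in>D. \<forall>Y\<in>D. nonneg (\<lambda>x. Y x - X x) \<longrightarrow> \<rho> X \<ge> \<rho> Y)"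

definition convex_rm :: "('a \<Rightarrow> real) set \<Rightarrow> (('a \<Rightarrow> real) \<Rightarrow> real) \<Rightarrow> bool" where
  "convex_rm D \<rho> \<longleftrightarrow> (\<forall>X\<in>D. \<forall>Y\<in>D. \<forall>t::real. 0 \<le> t \<and> t \<le> 1 \<longrightarrow>
      \<rho> (\<lambda>x. t * X x + (1 - t) * Y x) \<le> t * \<rho> X + (1 - t) * \<rho> Y)"

definition transl_inv :: "('a \<Rightarrow> real) set \<Rightarrow> (('a \<Rightarrow> real) \<Rightarrow> real) \<Rightarrow> bool" where
  "transl_inv D \<rho> \<longleftrightarrow> (\<forall>X\<in>D. \<forall>a::real. \<rho> (\<lambda>x. X x + a) = \<rho> X - a)"

definition pos_homogeneous :: "('a \<Rightarrow> real) set \<Rightarrow> (('a \<Rightarrow> real) \<Rightarrow> real) \<Rightarrow> bool" where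
  "pos_homogeneous D \<rho> \<longleftrightarrow> (\<forall>X\<in>D. \<forall>t::real. t > 0 \<longrightarrow> \<rho> (\<lambda>x. t * X x) = t * \<rho> X)"

definition convex_risk_measure ::
  "('a \<Rightarrow> real) set \<Rightarrow> (('a \<Rightarrow> real) \<Rightarrow> bool) \<Rightarrow> (('a \<Rightarrow> real) \<Rightarrow> real) \<Rightarrow> bool" where
  "convex_risk_measure D nonneg \<rho> \<longleftrightarrow> monotone_rm D nonneg \<rho> \<and> convex_rm D \<rho> \<and> transl_inv D \<rho>"

definition sublinear_risk_measure ::
  "('a \<Rightarrow> real) set \<Rightarrow> (('a \<Rightarrow> real) \<Rightarrow> bool) \<Rightarrow> (('a \<Rightarrow> real) \<Rightarrow> real) \<Rightarrow> bool" where
  "sublinear_risk_measure D nonneg \<rho> \<longleftrightarrow> convex_risk_measure D nonneg \<rho> \<and> pos_homogeneous D \<rho>"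

definition pw_nonneg :: "('a \<Rightarrow> real) \<Rightarrow> bool" where
  "pw_nonneg X \<longleftrightarrow> (\<forall>x. 0 \<le> X x)"

definition regular_rm :: "('a \<Rightarrow> real) set \<Rightarrow> (('a \<Rightarrow> real) \<Rightarrow> real) \<Rightarrow> bool" where
  "regular_rm L \<rho> \<longleftrightarrow> (\<forall>Xs. (\<forall>n. Xs n \<in> L) \<and> decr_to_zero Xs \<longrightarrow>
       (\<lambda>n. \<rho> (\<lambda>x. - Xs n x)) \<longlonglongrightarrow> 0)"

definition uniformly_regular :: "('a \<Rightarrow> real) set \<Rightarrow> (('a \<Rightarrow> real) \<Rightarrow> real) \<Rightarrow> bool" where
  "uniformly_regular L \<rho> \<longleftrightarrow>
     (\<forall>X\<in>L. \<exists>B::real. \<forall>t::real. t > 0 \<longrightarrow> \<rho> (\<lambda>x. t * X x) / t \<le> B) \<and>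
     (\<forall>Xs. (\<forall>n. Xs n \<in> L) \<and> decr_to_zero Xs \<longrightarrow>
        (\<forall>e>0. \<exists>N. \<forall>n\<ge>N. \<forall>t::real. t > 0 \<longrightarrow> \<bar>\<rho> (\<lambda>x. - t * Xs n x) / t\<bar> < e))"

definition capacity :: "('a \<Rightarrow> real) set \<Rightarrow> (('a \<Rightarrow> real) \<Rightarrow> real) \<Rightarrow> bool" where
  "capacity L c \<longleftrightarrow>
     (\<forall>f\<in>L. \<forall>g\<in>L. c (\<lambda>x. f x + g x) \<le> c f + c g) \<and>
     (\<forall>f\<in>L. \<forall>a::real. c (\<lambda>x. a * f x) = \<bar>a\<bar> * c f) \<and>
     (\<forall>f\<in>L. \<forall>g\<in>L. (\<forall>x. \<bar>f x\<bar> \<le> \<bar>g x\<bar>) \<longrightarrow> c f \<le> c g) \<and>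
     (\<forall>fs. (\<forall>n. fs n \<in> L) \<and> decr_to_zero fs \<longrightarrow> (INF n. c (fs n)) = 0)"

definition lsc :: "('a::topological_space \<Rightarrow> real) \<Rightarrow> bool" where
  "lsc f \<longleftrightarrow> (\<forall>t. open {x. t < f x})"

text \<open>Extension of c: first to nonnegative l.s.c. functions, then to all functions.\<close>
definition cap_lsc :: "('a \<Rightarrow> real) set \<Rightarrow> (('a \<Rightarrow> real) \<Rightarrow> real) \<Rightarrow> ('a \<Rightarrow> real) \<Rightarrow> ereal" where
  "cap_lsc L c f = (SUP \<phi>\<in>{\<phi>\<in>L. \<forall>x. 0 \<le> \<phi> x \<and> \<phi> x \<le> f x}. ereal (c \<phi>))"

definition cap_ext :: "('a::topological_space \<Rightarrow> real) set \<Rightarrow> (('a \<Rightarrow> real) \<Rightarrow> real) \<Rightarrow> ('a \<Rightarrow> real) \<Rightarrow> ereal" where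
  "cap_ext L c g = (INF f\<in>{f. lsc f \<and> (\<forall>x. \<bar>g x\<bar> \<le> f x)}. cap_lsc L c f)"

text \<open>Carrier of L^1(c) (before passing to the quotient by c-null functions):
the c-closure of L inside {g. c g < \<infinity>}.\<close>
definition L1_carrier :: "('a::topological_space \<Rightarrow> real) set \<Rightarrow> (('a \<Rightarrow> real) \<Rightarrow> real) \<Rightarrow> ('a \<Rightarrow> real) set" where
  "L1_carrier L c = {g. cap_ext L c g < \<infinity> \<and> (\<forall>e>0. \<exists>f\<in>L. cap_ext L c (\<lambda>x. g x - f x) < ereal e)}"

text \<open>Order on L^1(c): X \<ge> 0 iff there are nonnegative f_n in L with c(g - f_n) \<rightarrow> 0
(for a, equivalently every, representative g).\<close>
definition L1_nonneg :: "('a::topological_space \<Rightarrow> real) set \<Rightarrow> (('a \<Rightarrow> real) \<Rightarrow> real) \<Rightarrow> ('a \<Rightarrow> real) \<Rightarrow> bool" where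
  "L1_nonneg L c g \<longleftrightarrow> (\<exists>fs. (\<forall>n. fs n \<in> L \<and> pw_nonneg (fs n)) \<and>
        (\<lambda>n. cap_ext L c (\<lambda>x. g x - fs n x)) \<longlonglongrightarrow> 0)"

definition L1_continuous :: "('a::topological_space \<Rightarrow> real) set \<Rightarrow> (('a \<Rightarrow> real) \<Rightarrow> real) \<Rightarrow> (('a \<Rightarrow> real) \<Rightarrow> real) \<Rightarrow> bool" where
  "L1_continuous L c R \<longleftrightarrow> (\<forall>g\<in>L1_carrier L c. \<forall>e>0. \<exists>d>0. \<forall>h\<in>L1_carrier L c.
       cap_ext L c (\<lambda>x. h x - g x) < ereal d \<longrightarrow> \<bar>R h - R g\<bar> < e)"

end

theory Submission
  imports Defs
begin

primrec runmax :: "(nat \<Rightarrow> 'a \<Rightarrow> real) \<Rightarrow> nat \<Rightarrow> 'a \<Rightarrow> real" where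
  "runmax e 0 = e 0"
| "runmax e (Suc n) = (\<lambda>y. max (runmax e n y) (e (Suc n) y))"

lemma eps_zero: fixes a :: real assumes "\<And>e. e > 0 \<Longrightarrow> \<bar>a\<bar> \<le> e" shows "a = 0"
proof -
  have "\<bar>a\<bar> \<le> 0 + e" if "e > 0" for e using assms that by simp
  then have "\<bar>a\<bar> \<le> 0" by (rule field_le_epsilon)
  then show ?thesis by simp
qed

lemma eps_le: fixes a b :: real assumes "\<And>e. e > 0 \<Longrightarrow> a \<le> b + e" shows "a \<le> b"
  using assms by (rule field_le_epsilon)

lemma runmax_ge: "k \<le> n \<Longrightarrow> e k y \<le> runmax e n y"
proof (induction n)
  case 0 then show ?case by simp
next
  case (Suc n) then show ?case by (cases "k = Suc n") auto
qed

lemma runmax_mono: "runmax e n y \<le> runmax e (Suc n) y" by simp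

lemma runmax_in: "(\<And>k. e k \<in> P) \<Longrightarrow> (\<And>f g. f \<in> P \<Longrightarrow> g \<in> P \<Longrightarrow> (\<lambda>y. max (f y) (g y)) \<in> P) \<Longrightarrow> runmax e n \<in> P"
  by (induction n) auto

definition approx_seq where
  "approx_seq L c g n = (SOME f. f \<in> L \<and> cap_ext L c (\<lambda>x. g x - f x) < ereal (1 / real (Suc n)))"
definition ext_fun where
  "ext_fun L c P g = lim (\<lambda>n. P (approx_seq L c g n))"

lemma sep_metr_base:
  assumes metr: "metrizable_space (euclidean :: 'a::topological_space topology)"
    and sep: "separable_space (euclidean :: 'a topology)"
  shows "\<exists>B::'a set set. countable B \<and> (\<forall>V\<in>B. open V) \<and> (\<forall>U x. open U \<longrightarrow> x \<in> U \<longrightarrow> (\<exists>V\<in>B. x \<in> V \<and> V \<subseteq> U))"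
proof -
  obtain M d where md: "Metric_space M d" and eq: "(euclidean :: 'a topology) = Metric_space.mtopology M d"
    using metr unfolding metrizable_space_def by blast
  interpret m: Metric_space M d by (rule md)
  have MU: "M = UNIV" using eq m.topspace_mtopology by (metis topspace_euclidean)
  obtain C where C: "countable C" "euclidean closure_of C = topspace (euclidean :: 'a topology)"
    using sep unfolding separable_space_def by blast
  have Cd: "\<forall>r>0. \<exists>y\<in>C. y \<in> m.mball x r" for x
  proof -
    have "x \<in> m.mtopology closure_of C" using C(2) eq MU m.topspace_mtopology by simp
    then show ?thesis using m.metric_closure_of[of C] by auto
  qed
  define B where "B = (\<lambda>(y, q). m.mball y q) ` (C \<times> {q. q \<in> \<rat> \<and> q > 0})"
  have "countable B" unfolding B_def using C(1) countable_rat
    by (intro countable_image countable_SIGMA) (auto intro: countable_subset[of _ \<rat>])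
  moreover have "\<forall>V\<in>B. open V"
    unfolding B_def using eq m.openin_mball by (auto simp: open_openin)
  moreover have "\<exists>V\<in>B. x \<in> V \<and> V \<subseteq> U" if U: "open U" "x \<in> U" for U x
  proof -
    have "openin m.mtopology U" using U eq by (simp add: open_openin)
    then obtain r where r: "r > 0" "m.mball x r \<subseteq> U" using U(2) m.openin_mtopology by blast
    obtain q where q: "q \<in> \<rat>" "0 < q" "q < r / 2" using Rats_dense_in_real[of 0 "r/2"] r by auto
    obtain y where y: "y \<in> C" "y \<in> m.mball x q" using Cd q by blast
    have "x \<in> m.mball y q" using y m.commute by auto
    moreover have "m.mball y q \<subseteq> m.mball x r"
    proof
      fix z assume "z \<in> m.mball y q"
      then have "d y z < q" "z \<in> M" by auto
      moreover have "d x y < q" "x \<in> M" "y \<in> M" using y by auto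
      moreover have "d x z \<le> d x y + d y z" using m.triangle calculation by blast
      ultimately show "z \<in> m.mball x r" using q by simp
    qed
    moreover have "m.mball y q \<in> B" unfolding B_def using y q by auto
    ultimately show ?thesis using r by blast
  qed
  ultimately show ?thesis by blast
qed

locale LS =
  fixes L :: "('a::topological_space \<Rightarrow> real) set" and r1 :: "('a \<Rightarrow> real) \<Rightarrow> real"
    and c :: "('a \<Rightarrow> real) \<Rightarrow> real" and B :: "'a set set"
  assumes Lcb: "\<forall>f\<in>L. bounded_cont f"
    and Ladd: "\<forall>f\<in>L. \<forall>g\<in>L. (\<lambda>x. f x + g x) \<in> L"
    and Lscal: "\<forall>f\<in>L. \<forall>a::real. (\<lambda>x. a * f x) \<in> L"
    and Lsup: "\<forall>f\<in>L. \<forall>g\<in>L. (\<lambda>x. max (f x) (g x)) \<in> L"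
    and Lconst: "\<forall>a::real. const_fun a \<in> L"
    and Lgen: "(euclidean :: 'a topology) = topology_generated_by {f -` U | f U. f \<in> L \<and> open U}"
    and rho1_sl: "sublinear_risk_measure L pw_nonneg r1"
    and rho1_reg: "regular_rm L r1"
    and c_def: "c = (\<lambda>X. r1 (\<lambda>x. - \<bar>X x\<bar>))"
    and baseB: "countable B" "\<And>V. V\<in>B \<Longrightarrow> open V" "\<And>U x. open U \<Longrightarrow> x\<in>U \<Longrightarrow> \<exists>V\<in>B. x\<in>V \<and> V\<subseteq>U"
begin

lemma L_add: "f \<in> L \<Longrightarrow> g \<in> L \<Longrightarrow> (\<lambda>x. f x + g x) \<in> L" using Ladd by blast
lemma L_scal: "f \<in> L \<Longrightarrow> (\<lambda>x. a * f x) \<in> L" using Lscal by blast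
lemma L_max: "f \<in> L \<Longrightarrow> g \<in> L \<Longrightarrow> (\<lambda>x. max (f x) (g x)) \<in> L" using Lsup by blast
lemma L_const: "(\<lambda>x. a) \<in> L" using Lconst unfolding const_fun_def by blast
lemma L_neg: "f \<in> L \<Longrightarrow> (\<lambda>x. - f x) \<in> L"
  using L_scal[of f "-1"] by simp
lemma L_diff: "f \<in> L \<Longrightarrow> g \<in> L \<Longrightarrow> (\<lambda>x. f x - g x) \<in> L"
  using L_add[of f "\<lambda>x. - g x"] L_neg[of g] by simp
lemma L_abs: "f \<in> L \<Longrightarrow> (\<lambda>x. \<bar>f x\<bar>) \<in> L"
proof -
  assume "f \<in> L"
  then have "(\<lambda>x. max (f x) (- f x)) \<in> L" using L_max L_neg by blast
  moreover have "(\<lambda>x. max (f x) (- f x)) = (\<lambda>x. \<bar>f x\<bar>)" by (auto simp: fun_eq_iff)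
  ultimately show ?thesis by simp
qed
lemma L_nabs: "f \<in> L \<Longrightarrow> (\<lambda>x. - \<bar>f x\<bar>) \<in> L" using L_abs L_neg by blast
lemma L_min: "f \<in> L \<Longrightarrow> g \<in> L \<Longrightarrow> (\<lambda>x. min (f x) (g x)) \<in> L"
proof -
  assume "f \<in> L" "g \<in> L"
  then have "(\<lambda>x. - max (- f x) (- g x)) \<in> L" using L_max L_neg by blast
  moreover have "(\<lambda>x. - max (- f x) (- g x)) = (\<lambda>x. min (f x) (g x))" by (auto simp: fun_eq_iff)
  ultimately show ?thesis by simp
qed
lemma L_addc: "f \<in> L \<Longrightarrow> (\<lambda>x. f x + a) \<in> L" using L_add L_const by blast
lemma L_cont: "f \<in> L \<Longrightarrow> continuous_on UNIV f" using Lcb unfolding bounded_cont_def by blast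

lemma r1_mono: "X \<in> L \<Longrightarrow> Y \<in> L \<Longrightarrow> (\<And>x. X x \<le> Y x) \<Longrightarrow> r1 Y \<le> r1 X"
  using rho1_sl unfolding sublinear_risk_measure_def convex_risk_measure_def monotone_rm_def pw_nonneg_def
  by auto
lemma r1_transl: "X \<in> L \<Longrightarrow> r1 (\<lambda>x. X x + a) = r1 X - a"
  using rho1_sl unfolding sublinear_risk_measure_def convex_risk_measure_def transl_inv_def by auto
lemma r1_homog: "X \<in> L \<Longrightarrow> t > 0 \<Longrightarrow> r1 (\<lambda>x. t * X x) = t * r1 X"
  using rho1_sl unfolding sublinear_risk_measure_def pos_homogeneous_def by auto
lemma r1_conv: "X \<in> L \<Longrightarrow> Y \<in> L \<Longrightarrow> 0 \<le> t \<Longrightarrow> t \<le> 1 \<Longrightarrow>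
   r1 (\<lambda>x. t * X x + (1 - t) * Y x) \<le> t * r1 X + (1 - t) * r1 Y"
  using rho1_sl unfolding sublinear_risk_measure_def convex_risk_measure_def convex_rm_def by auto
lemma r1_zero: "r1 (\<lambda>x. 0) = 0"
  using r1_homog[of "\<lambda>x. 0" 2] L_const by simp
lemma r1_subadd: assumes "X \<in> L" "Y \<in> L" shows "r1 (\<lambda>x. X x + Y x) \<le> r1 X + r1 Y"
proof -
  have 2: "(\<lambda>x. 2 * X x) \<in> L" "(\<lambda>x. 2 * Y x) \<in> L" using assms L_scal by auto
  have "r1 (\<lambda>x. X x + Y x) = r1 (\<lambda>x. (1/2) * (2 * X x) + (1 - 1/2) * (2 * Y x))" by simp
  also have "\<dots> \<le> (1/2) * r1 (\<lambda>x. 2 * X x) + (1 - 1/2) * r1 (\<lambda>x. 2 * Y x)"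
    by (rule r1_conv[OF 2]) auto
  also have "\<dots> = r1 X + r1 Y" using r1_homog assms by simp
  finally show ?thesis .
qed

lemma c_L: "c f = r1 (\<lambda>x. - \<bar>f x\<bar>)" using c_def by simp
lemma c_nonneg: "f \<in> L \<Longrightarrow> 0 \<le> c f"
  using r1_mono[of "\<lambda>x. - \<bar>f x\<bar>" "\<lambda>x. 0"] L_abs L_neg L_const r1_zero c_L by auto
lemma c_mono: "f \<in> L \<Longrightarrow> g \<in> L \<Longrightarrow> (\<And>x. \<bar>f x\<bar> \<le> \<bar>g x\<bar>) \<Longrightarrow> c f \<le> c g"
  unfolding c_L by (rule r1_mono) (auto intro: L_abs L_neg)
lemma c_abs: "c (\<lambda>x. \<bar>f x\<bar>) = c f" unfolding c_L by simp
lemma c_subadd: assumes "f \<in> L" "g \<in> L" shows "c (\<lambda>x. f x + g x) \<le> c f + c g"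
proof -
  have "c (\<lambda>x. f x + g x) \<le> r1 (\<lambda>x. (- \<bar>f x\<bar>) + (- \<bar>g x\<bar>))"
    unfolding c_L by (rule r1_mono) (auto intro!: L_nabs L_diff L_abs L_neg L_add assms abs_triangle_ineq)
  also have "\<dots> \<le> c f + c g" unfolding c_L by (rule r1_subadd) (auto intro: L_nabs L_abs L_neg assms)
  finally show ?thesis .
qed
lemma c_scal: assumes "f \<in> L" shows "c (\<lambda>x. a * f x) = \<bar>a\<bar> * c f"
proof (cases "a = 0")
  case True then show ?thesis using r1_zero c_L by simp
next
  case False
  have "c (\<lambda>x. a * f x) = r1 (\<lambda>x. \<bar>a\<bar> * (- \<bar>f x\<bar>))" unfolding c_L by (simp add: abs_mult)
  also have "\<dots> = \<bar>a\<bar> * c f" unfolding c_L using False by (intro r1_homog) (auto intro: L_nabs L_abs L_neg assms)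
  finally show ?thesis .
qed
lemma c_minus: "c (\<lambda>x. f x - g x) = c (\<lambda>x. g x - f x)" unfolding c_L by (simp add: abs_minus_commute)

lemma r1_lip1: assumes "X \<in> L" "Y \<in> L" shows "r1 X \<le> r1 Y + c (\<lambda>x. X x - Y x)"
proof -
  have "r1 X = r1 (\<lambda>x. Y x + (X x - Y x))" by simp
  also have "\<dots> \<le> r1 Y + r1 (\<lambda>x. X x - Y x)" by (rule r1_subadd) (auto intro: assms L_diff)
  also have "r1 (\<lambda>x. X x - Y x) \<le> c (\<lambda>x. X x - Y x)" unfolding c_L
    by (rule r1_mono) (auto intro!: assms L_diff L_nabs)
  finally show ?thesis by simp
qed
lemma r1_lip: "X \<in> L \<Longrightarrow> Y \<in> L \<Longrightarrow> \<bar>r1 X - r1 Y\<bar> \<le> c (\<lambda>x. X x - Y x)"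
  using r1_lip1[of X Y] r1_lip1[of Y X] c_minus[of X Y] by auto


lemma decr_nonneg: "decr_to_zero Xs \<Longrightarrow> 0 \<le> Xs n x"
  unfolding decr_to_zero_def by (intro decseq_ge[of "\<lambda>n. Xs n x"]) (auto simp: decseq_Suc_iff)

lemma capacity_c: "capacity L c"
  unfolding capacity_def
proof (intro conjI ballI allI impI)
  fix f g assume "f \<in> L" "g \<in> L"
  then show "c (\<lambda>x. f x + g x) \<le> c f + c g" by (rule c_subadd)
next
  fix f a assume "f \<in> L" then show "c (\<lambda>x. a * f x) = \<bar>a\<bar> * c f" by (rule c_scal)
next
  fix f g assume "f \<in> L" "g \<in> L" "\<forall>x. \<bar>f x\<bar> \<le> \<bar>g x\<bar>"
  then show "c f \<le> c g" using c_mono by blast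
next
  fix fs assume a: "(\<forall>n. fs n \<in> L) \<and> decr_to_zero fs"
  then have lim: "(\<lambda>n. r1 (\<lambda>x. - fs n x)) \<longlonglongrightarrow> 0" using rho1_reg unfolding regular_rm_def by blast
  have eq: "c (fs n) = r1 (\<lambda>x. - fs n x)" for n
    using decr_nonneg[of fs n] a unfolding c_L by simp
  have nn: "0 \<le> c (fs n)" for n using a c_nonneg by blast
  show "(INF n. c (fs n)) = 0"
  proof (rule antisym)
    show "0 \<le> (INF n. c (fs n))" by (rule cINF_greatest) (auto simp: nn)
    show "(INF n. c (fs n)) \<le> 0"
    proof (rule field_le_epsilon)
      fix e :: real assume "0 < e"
      with lim obtain N where "\<bar>r1 (\<lambda>x. - fs N x)\<bar> < e"
        unfolding LIMSEQ_def dist_real_def by force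
      then have "c (fs N) \<le> 0 + e" using eq by simp
      moreover have "(INF n. c (fs n)) \<le> c (fs N)"
        by (rule cINF_lower) (auto intro: bdd_belowI[of _ 0] simp: nn)
      ultimately show "(INF n. c (fs n)) \<le> 0 + e" by linarith
    qed
  qed
qed


lemma bump_gen:
  assumes "generate_topology_on {f -` U | f U. f \<in> L \<and> open U} W"
  shows "\<forall>x\<in>W. \<exists>\<psi>\<in>L. (\<forall>y. 0 \<le> \<psi> y \<and> \<psi> y \<le> 1) \<and> \<psi> x = 1 \<and> (\<forall>y. y \<notin> W \<longrightarrow> \<psi> y = 0)"
  using assms
proof (induction rule: generate_topology_on.induct)
  case Empty then show ?case by simp
next
  case (Int a b)
  show ?case
  proof
    fix x assume "x \<in> a \<inter> b"
    then have xa: "x \<in> a" and xb: "x \<in> b" by auto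
    from Int.IH(1) xa obtain \<psi>a where a: "\<psi>a \<in> L" "\<forall>y. 0 \<le> \<psi>a y \<and> \<psi>a y \<le> 1" "\<psi>a x = 1" "\<forall>y. y \<notin> a \<longrightarrow> \<psi>a y = 0"
      by blast
    from Int.IH(2) xb obtain \<psi>b where b: "\<psi>b \<in> L" "\<forall>y. 0 \<le> \<psi>b y \<and> \<psi>b y \<le> 1" "\<psi>b x = 1" "\<forall>y. y \<notin> b \<longrightarrow> \<psi>b y = 0"
      by blast
    show "\<exists>\<psi>\<in>L. (\<forall>y. 0 \<le> \<psi> y \<and> \<psi> y \<le> 1) \<and> \<psi> x = 1 \<and> (\<forall>y. y \<notin> a \<inter> b \<longrightarrow> \<psi> y = 0)"
    proof (rule bexI[of _ "\<lambda>y. min (\<psi>a y) (\<psi>b y)"])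
      show "(\<lambda>y. min (\<psi>a y) (\<psi>b y)) \<in> L" using a(1) b(1) by (rule L_min)
      show "(\<forall>y. 0 \<le> min (\<psi>a y) (\<psi>b y) \<and> min (\<psi>a y) (\<psi>b y) \<le> 1) \<and> min (\<psi>a x) (\<psi>b x) = 1 \<and>
        (\<forall>y. y \<notin> a \<inter> b \<longrightarrow> min (\<psi>a y) (\<psi>b y) = 0)"
      proof (intro conjI allI impI)
        fix y assume "y \<notin> a \<inter> b"
        then show "min (\<psi>a y) (\<psi>b y) = 0" using a(2,4) b(2,4) by (metis IntI min.absorb1 min.absorb2)
      qed (use a b in \<open>auto simp: min_le_iff_disj\<close>)
    qed
  qed
next
  case (UN K)
  show ?case
  proof
    fix x assume "x \<in> \<Union>K"
    then obtain k where k: "k \<in> K" "x \<in> k" by blast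
    with UN.IH obtain \<psi> where "\<psi> \<in> L" "\<forall>y. 0 \<le> \<psi> y \<and> \<psi> y \<le> 1" "\<psi> x = 1" "\<forall>y. y \<notin> k \<longrightarrow> \<psi> y = 0"
      by blast
    then show "\<exists>\<psi>\<in>L. (\<forall>y. 0 \<le> \<psi> y \<and> \<psi> y \<le> 1) \<and> \<psi> x = 1 \<and> (\<forall>y. y \<notin> \<Union>K \<longrightarrow> \<psi> y = 0)"
      using k by blast
  qed
next
  case (Basis s)
  then obtain f V where s: "s = f -` V" "f \<in> L" "open V" by blast
  show ?case
  proof
    fix x assume "x \<in> s"
    then have "f x \<in> V" using s by simp
    then obtain e where e: "e > 0" "\<And>z. dist z (f x) < e \<Longrightarrow> z \<in> V"
      using s(3) \<open>f x \<in> V\<close> unfolding open_dist by blast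
    define \<psi> where "\<psi> = (\<lambda>y. max (1 + (- 1 / e) * \<bar>f y + (- f x)\<bar>) 0)"
    have "\<psi> \<in> L" unfolding \<psi>_def
      by (intro L_max L_add L_scal L_abs L_addc s L_const)
    moreover have "\<forall>y. 0 \<le> \<psi> y \<and> \<psi> y \<le> 1" using e unfolding \<psi>_def by auto
    moreover have "\<psi> x = 1" unfolding \<psi>_def by simp
    moreover have "\<psi> y = 0" if "y \<notin> s" for y
    proof -
      have "\<not> dist (f y) (f x) < e" using that e s by auto
      then have "e \<le> \<bar>f y - f x\<bar>" by (simp add: dist_real_def)
      then have "1 + (- 1 / e) * \<bar>f y + (- f x)\<bar> \<le> 0" using e by (simp add: field_simps)
      then show ?thesis unfolding \<psi>_def by simp
    qed
    ultimately show "\<exists>\<psi>\<in>L. (\<forall>y. 0 \<le> \<psi> y \<and> \<psi> y \<le> 1) \<and> \<psi> x = 1 \<and> (\<forall>y. y \<notin> s \<longrightarrow> \<psi> y = 0)"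
      by blast
  qed
qed

lemma bump:
  assumes "open W" "x \<in> W"
  shows "\<exists>\<psi>\<in>L. (\<forall>y. 0 \<le> \<psi> y \<and> \<psi> y \<le> 1) \<and> \<psi> x = 1 \<and> (\<forall>y. y \<notin> W \<longrightarrow> \<psi> y = 0)"
proof -
  have "openin (topology_generated_by {f -` U | f U. f \<in> L \<and> open U}) W"
    using assms(1) Lgen by (metis open_openin)
  then show ?thesis using bump_gen assms(2) openin_topology_generated_by_iff by blast
qed

lemma lsc_approx1:
  assumes "lsc F" "\<And>y. 0 \<le> F y" "t < F x"
  shows "\<exists>\<psi>\<in>L. (\<forall>y. 0 \<le> \<psi> y \<and> \<psi> y \<le> F y) \<and> t < \<psi> x"
proof (cases "t < 0")
  case True then show ?thesis using L_const[of 0] assms(2) by (intro bexI[of _ "\<lambda>y. 0"]) auto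
next
  case False
  define s where "s = (t + F x) / 2"
  have s: "t < s" "s < F x" "0 < s" using assms(3) False unfolding s_def by auto
  have "open {y. s < F y}" using assms(1) unfolding lsc_def by blast
  then obtain \<psi>0 where p: "\<psi>0 \<in> L" "\<forall>y. 0 \<le> \<psi>0 y \<and> \<psi>0 y \<le> 1" "\<psi>0 x = 1"
      "\<forall>y. y \<notin> {y. s < F y} \<longrightarrow> \<psi>0 y = 0"
    using bump[of "{y. s < F y}" x] s by auto
  have "\<forall>y. 0 \<le> s * \<psi>0 y \<and> s * \<psi>0 y \<le> F y"
  proof
    fix y
    show "0 \<le> s * \<psi>0 y \<and> s * \<psi>0 y \<le> F y"
    proof (cases "s < F y")
      case True
      have a1: "s * \<psi>0 y \<le> s * 1" using p(2) s by (intro mult_left_mono) auto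
      have a2: "0 \<le> s * \<psi>0 y" using p(2) s by (intro mult_nonneg_nonneg) auto
      from a1 a2 True show ?thesis by linarith
    next
      case False then show ?thesis using p(4) assms(2)[of y] by auto
    qed
  qed
  then show ?thesis using p s by (intro bexI[of _ "\<lambda>y. s * \<psi>0 y"]) (auto intro: L_scal)
qed

lemma lsc_seq:
  assumes "lsc F" "\<And>y. 0 \<le> F y"
  shows "\<exists>a. (\<forall>n. a n \<in> L \<and> (\<forall>y. 0 \<le> a n y \<and> a n y \<le> F y)) \<and> (\<forall>n y. a n y \<le> a (Suc n) y)
     \<and> (\<forall>y. (\<lambda>n. a n y) \<longlonglongrightarrow> F y)"
proof -
  define \<Psi> where "\<Psi> = {\<psi>\<in>L. \<forall>y. 0 \<le> \<psi> y \<and> \<psi> y \<le> F y}"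
  define g where "g = (\<lambda>(V, q::real). if \<exists>\<psi>\<in>\<Psi>. \<forall>y\<in>V. q \<le> \<psi> y
     then SOME \<psi>. \<psi> \<in> \<Psi> \<and> (\<forall>y\<in>V. q \<le> \<psi> y) else (\<lambda>y. 0))"
  define \<Phi> where "\<Phi> = insert (\<lambda>y. 0) (g ` (B \<times> \<rat>))"
  have z: "(\<lambda>y. 0) \<in> \<Psi>" unfolding \<Psi>_def using L_const assms(2) by auto
  have g_in: "g p \<in> \<Psi>" for p
  proof -
    obtain V q where p: "p = (V, q)" by force
    show ?thesis
    proof (cases "\<exists>\<psi>\<in>\<Psi>. \<forall>y\<in>V. q \<le> \<psi> y")
      case True
      then have "\<exists>\<psi>. \<psi> \<in> \<Psi> \<and> (\<forall>y\<in>V. q \<le> \<psi> y)" by blast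
      then have "(SOME \<psi>. \<psi> \<in> \<Psi> \<and> (\<forall>y\<in>V. q \<le> \<psi> y)) \<in> \<Psi>"
        by (rule someI2_ex) blast
      then show ?thesis using True unfolding g_def p by simp
    next
      case False then show ?thesis using z unfolding g_def p prod.case if_not_P[OF False] by simp
    qed
  qed
  have PhiPsi: "\<Phi> \<subseteq> \<Psi>" unfolding \<Phi>_def using z g_in by auto
  have cnt: "countable \<Phi>" unfolding \<Phi>_def using baseB(1) countable_rat by auto
  have rich: "\<exists>\<phi>\<in>\<Phi>. t < \<phi> x" if tx: "t < F x" for x t
  proof -
    obtain \<psi> where \<psi>: "\<psi> \<in> L" "\<forall>y. 0 \<le> \<psi> y \<and> \<psi> y \<le> F y" "t < \<psi> x"
      using lsc_approx1[OF assms tx] by blast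
    obtain q where q: "q \<in> \<rat>" "t < q" "q < \<psi> x" using Rats_dense_in_real \<psi>(3) by blast
    have "open {y. q < \<psi> y}" using L_cont[OF \<psi>(1)] by (intro open_Collect_less) auto
    then obtain V where V: "V \<in> B" "x \<in> V" "V \<subseteq> {y. q < \<psi> y}" using baseB(3) q by force
    have ex: "\<exists>\<psi>\<in>\<Psi>. \<forall>y\<in>V. q \<le> \<psi> y"
      using \<psi> V unfolding \<Psi>_def by (intro bexI[of _ \<psi>]) auto
    then have "\<exists>\<psi>. \<psi> \<in> \<Psi> \<and> (\<forall>y\<in>V. q \<le> \<psi> y)" by blast
    then have "\<forall>y\<in>V. q \<le> (SOME \<psi>. \<psi> \<in> \<Psi> \<and> (\<forall>y\<in>V. q \<le> \<psi> y)) y"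
      by (rule someI2_ex) blast
    then have "\<forall>y\<in>V. q \<le> g (V, q) y" unfolding g_def prod.case if_P[OF ex] .
    then have "t < g (V, q) x" using V q by force
    moreover have "g (V, q) \<in> \<Phi>" unfolding \<Phi>_def using V q by auto
    ultimately show ?thesis by blast
  qed
  define e where "e = from_nat_into \<Phi>"
  have re: "range e = \<Phi>" unfolding e_def by (rule range_from_nat_into) (use cnt \<Phi>_def in auto)
  have eP: "e k \<in> \<Psi>" for k using re PhiPsi by auto
  define a where "a = runmax e"
  have aP: "a n \<in> \<Psi>" for n unfolding a_def
    by (rule runmax_in) (use eP in \<open>auto simp: \<Psi>_def le_max_iff_disj intro: L_max\<close>)
  have inc: "a n y \<le> a (Suc n) y" for n y unfolding a_def by simp
  have inc2: "a m y \<le> a n y" if "m \<le> n" for m n y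
    using that inc by (induction n) (auto simp: le_Suc_eq intro: order_trans)
  have lim: "(\<lambda>n. a n y) \<longlonglongrightarrow> F y" for y
  proof (rule order_tendstoI)
    fix u assume "u > F y"
    then show "eventually (\<lambda>n. a n y < u) sequentially"
      using aP unfolding \<Psi>_def by (intro always_eventually) (auto intro: le_less_trans)
  next
    fix t assume "t < F y"
    then obtain \<phi> where "\<phi> \<in> \<Phi>" "t < \<phi> y" using rich by blast
    then obtain k where k: "t < e k y" using re by (metis imageE)
    show "eventually (\<lambda>n. t < a n y) sequentially"
      unfolding eventually_sequentially
    proof (intro exI allI impI)
      fix n assume "k \<le> n"
      then have "e k y \<le> a n y" unfolding a_def by (rule runmax_ge)
      then show "t < a n y" using k by simp
    qed
  qed
  show ?thesis using aP inc lim unfolding \<Psi>_def by blast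
qed


abbreviation cl where "cl \<equiv> cap_lsc L c"
abbreviation ce where "ce \<equiv> cap_ext L c"

lemma c_zero: "c (\<lambda>x. 0) = 0" unfolding c_L using r1_zero by simp

lemma cl_upper: "\<phi> \<in> L \<Longrightarrow> (\<And>x. 0 \<le> \<phi> x \<and> \<phi> x \<le> F x) \<Longrightarrow> ereal (c \<phi>) \<le> cl F"
  unfolding cap_lsc_def by (rule SUP_upper) auto

lemma cl_nonneg: "(\<And>x. 0 \<le> F x) \<Longrightarrow> 0 \<le> cl F"
  using cl_upper[of "\<lambda>x. 0" F] L_const c_zero by (simp add: zero_ereal_def)

lemma cl_real: assumes "(\<And>x. 0 \<le> F x)" "cl F < ereal e" shows "\<exists>A. cl F = ereal A \<and> A < e"
proof -
  have "0 \<le> cl F" using cl_nonneg assms(1) by blast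
  then show ?thesis using assms(2) by (cases "cl F") auto
qed

lemma lsc_add: assumes "lsc F1" "lsc F2" shows "lsc (\<lambda>x. F1 x + F2 x)"
  unfolding lsc_def
proof
  fix t
  have "{x. t < F1 x + F2 x} = (\<Union>r. {x. r < F1 x} \<inter> {x. t - r < F2 x})"
  proof (rule set_eqI, rule iffI)
    fix x assume "x \<in> {x. t < F1 x + F2 x}"
    then have "x \<in> {x. F1 x - (F1 x + F2 x - t)/2 < F1 x} \<inter> {x. t - (F1 x - (F1 x + F2 x - t)/2) < F2 x}"
      by (auto simp: field_simps)
    then show "x \<in> (\<Union>r. {x. r < F1 x} \<inter> {x. t - r < F2 x})" by blast
  qed auto
  moreover have "open (\<Union>r. {x. r < F1 x} \<inter> {x. t - r < F2 x})"
    using assms unfolding lsc_def by (intro open_UN open_Int) auto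
  ultimately show "open {x. t < F1 x + F2 x}" by simp
qed

lemma lsc_scale: assumes "lsc F" "r > 0" shows "lsc (\<lambda>x. r * F x)"
  unfolding lsc_def
proof
  fix t
  have "{x. t < r * F x} = {x. t / r < F x}" using assms(2) by (auto simp: field_simps)
  then show "open {x. t < r * F x}" using assms(1) unfolding lsc_def by simp
qed

lemma lsc_L: "f \<in> L \<Longrightarrow> lsc (\<lambda>x. \<bar>f x\<bar>)"
  unfolding lsc_def using L_cont L_abs by (auto intro!: open_Collect_less continuous_on_const)

lemma cl_subadd:
  assumes F1: "lsc F1" "\<And>x. 0 \<le> F1 x" "cl F1 \<le> ereal A1"
    and F2: "lsc F2" "\<And>x. 0 \<le> F2 x" "cl F2 \<le> ereal A2"
  shows "cl (\<lambda>x. F1 x + F2 x) \<le> ereal (A1 + A2)"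
  unfolding cap_lsc_def
proof (rule SUP_least)
  fix \<phi> assume "\<phi> \<in> {\<phi> \<in> L. \<forall>x. 0 \<le> \<phi> x \<and> \<phi> x \<le> F1 x + F2 x}"
  then have \<phi>: "\<phi> \<in> L" "\<And>x. 0 \<le> \<phi> x" "\<And>x. \<phi> x \<le> F1 x + F2 x" by auto
  obtain a where a: "\<forall>n. a n \<in> L \<and> (\<forall>y. 0 \<le> a n y \<and> a n y \<le> F1 y)" "\<forall>n y. a n y \<le> a (Suc n) y"
    "\<forall>y. (\<lambda>n. a n y) \<longlonglongrightarrow> F1 y" using lsc_seq[OF F1(1,2)] by blast
  obtain b where b: "\<forall>n. b n \<in> L \<and> (\<forall>y. 0 \<le> b n y \<and> b n y \<le> F2 y)" "\<forall>n y. b n y \<le> b (Suc n) y"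
    "\<forall>y. (\<lambda>n. b n y) \<longlonglongrightarrow> F2 y" using lsc_seq[OF F2(1,2)] by blast
  define m where "m = (\<lambda>n x. min (\<phi> x) (a n x + b n x))"
  define h where "h = (\<lambda>n x. \<phi> x - m n x)"
  have mL: "m n \<in> L" for n unfolding m_def using a b \<phi> by (intro L_min L_add) auto
  have hL: "h n \<in> L" for n unfolding h_def using mL \<phi> by (intro L_diff) auto
  have hdec: "decr_to_zero h" unfolding decr_to_zero_def
  proof (intro conjI allI)
    fix n x
    have "a n x + b n x \<le> a (Suc n) x + b (Suc n) x" using a(2) b(2) by (intro add_mono) auto
    then show "h (Suc n) x \<le> h n x" unfolding h_def m_def by auto
  next
    fix x
    have "(\<lambda>n. \<phi> x - min (\<phi> x) (a n x + b n x)) \<longlonglongrightarrow> \<phi> x - min (\<phi> x) (F1 x + F2 x)"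
      using a(3) b(3) by (intro tendsto_intros) auto
    moreover have "\<phi> x - min (\<phi> x) (F1 x + F2 x) = 0" using \<phi>(3)[of x] by simp
    ultimately show "(\<lambda>n. h n x) \<longlonglongrightarrow> 0" unfolding h_def m_def by simp
  qed
  have bound: "c \<phi> \<le> A1 + A2 + c (h n)" for n
  proof -
    have ca: "ereal (c (a n)) \<le> ereal A1" using cl_upper[of "a n" F1] a(1) F1(3) by (meson order_trans)
    have cb: "ereal (c (b n)) \<le> ereal A2" using cl_upper[of "b n" F2] b(1) F2(3) by (meson order_trans)
    have "\<phi> = (\<lambda>x. m n x + h n x)" unfolding h_def by simp
    then have "c \<phi> \<le> c (m n) + c (h n)" using c_subadd[OF mL hL] by simp
    also have "c (m n) \<le> c (\<lambda>x. a n x + b n x)"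
      using a(1) b(1) \<phi>(2) by (intro c_mono mL L_add) (auto simp: m_def)
    also have "\<dots> \<le> c (a n) + c (b n)" using a(1) b(1) by (intro c_subadd) auto
    finally show ?thesis using ca cb by simp
  qed
  have "c \<phi> - A1 - A2 \<le> (INF n. c (h n))"
  proof (rule cINF_greatest)
    fix n show "c \<phi> - A1 - A2 \<le> c (h n)" using bound[of n] by linarith
  qed auto
  also have "(INF n. c (h n)) = 0" using capacity_c hL hdec unfolding capacity_def by blast
  finally show "ereal (c \<phi>) \<le> ereal (A1 + A2)" by simp
qed

lemma cl_scale:
  assumes "r > 0" "cl F \<le> ereal A"
  shows "cl (\<lambda>x. r * F x) \<le> ereal (r * A)"
  unfolding cap_lsc_def
proof (rule SUP_least)
  fix \<phi> assume "\<phi> \<in> {\<phi> \<in> L. \<forall>x. 0 \<le> \<phi> x \<and> \<phi> x \<le> r * F x}"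
  then have \<phi>: "\<phi> \<in> L" "\<And>x. 0 \<le> \<phi> x" "\<And>x. \<phi> x \<le> r * F x" by auto
  define \<psi> where "\<psi> = (\<lambda>x. (1/r) * \<phi> x)"
  have \<psi>L: "\<psi> \<in> L" unfolding \<psi>_def using \<phi> by (intro L_scal)
  have "\<And>x. 0 \<le> \<psi> x \<and> \<psi> x \<le> F x" unfolding \<psi>_def using \<phi>(2,3) assms(1)
    by (auto simp: field_simps)
  then have "ereal (c \<psi>) \<le> ereal A" using cl_upper[OF \<psi>L] assms(2) by (meson order_trans)
  then have "c \<psi> \<le> A" by simp
  moreover have "c \<phi> = r * c \<psi>"
  proof -
    have "\<phi> = (\<lambda>x. r * \<psi> x)" unfolding \<psi>_def using assms(1) by auto
    then show ?thesis using c_scal[OF \<psi>L, of r] assms(1) by simp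
  qed
  ultimately show "ereal (c \<phi>) \<le> ereal (r * A)" using assms(1) by simp
qed

lemma ce_nonneg: "0 \<le> ce u"
  unfolding cap_ext_def by (rule INF_greatest) (auto intro: cl_nonneg order_trans[OF abs_ge_zero])

lemma ce_lt: assumes "ce u < ereal e"
  obtains F A where "lsc F" "\<And>x. \<bar>u x\<bar> \<le> F x" "cl F = ereal A" "A < e"
proof -
  obtain F where F: "lsc F" "\<And>x. \<bar>u x\<bar> \<le> F x" "cl F < ereal e"
    using assms unfolding cap_ext_def INF_less_iff by auto
  have "\<And>x. 0 \<le> F x" using F(2) by (meson abs_ge_zero order_trans)
  then obtain A where "cl F = ereal A" "A < e" using cl_real F(3) by blast
  then show ?thesis using that F by blast
qed

lemma ce_le: "lsc F \<Longrightarrow> (\<And>x. \<bar>u x\<bar> \<le> F x) \<Longrightarrow> ce u \<le> cl F"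
  unfolding cap_ext_def by (rule INF_lower) auto

lemma ce_add: assumes "ce u < ereal e1" "ce v < ereal e2" shows "ce (\<lambda>x. u x + v x) < ereal (e1 + e2)"
proof -
  obtain F1 A1 where 1: "lsc F1" "\<And>x. \<bar>u x\<bar> \<le> F1 x" "cl F1 = ereal A1" "A1 < e1" using ce_lt[OF assms(1)] by blast
  obtain F2 A2 where 2: "lsc F2" "\<And>x. \<bar>v x\<bar> \<le> F2 x" "cl F2 = ereal A2" "A2 < e2" using ce_lt[OF assms(2)] by blast
  have n1: "\<And>x. 0 \<le> F1 x" using 1(2) by (meson abs_ge_zero order_trans)
  have n2: "\<And>x. 0 \<le> F2 x" using 2(2) by (meson abs_ge_zero order_trans)
  have "ce (\<lambda>x. u x + v x) \<le> cl (\<lambda>x. F1 x + F2 x)"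
    by (rule ce_le) (auto intro: lsc_add 1 2 abs_triangle_ineq order_trans add_mono)
  also have "\<dots> \<le> ereal (A1 + A2)" using cl_subadd[OF 1(1) n1 _ 2(1) n2] 1(3) 2(3) by simp
  also have "\<dots> < ereal (e1 + e2)" using 1(4) 2(4) by simp
  finally show ?thesis .
qed

lemma ce_scale: assumes "ce u < ereal e" shows "ce (\<lambda>x. a * u x) < ereal ((\<bar>a\<bar> + 1) * e)"
proof -
  obtain F A where 1: "lsc F" "\<And>x. \<bar>u x\<bar> \<le> F x" "cl F = ereal A" "A < e" using ce_lt[OF assms] by blast
  define r where "r = \<bar>a\<bar> + 1"
  have r: "r > 0" unfolding r_def by simp
  have "ce (\<lambda>x. a * u x) \<le> cl (\<lambda>x. r * F x)"
  proof (rule ce_le)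
    show "lsc (\<lambda>x. r * F x)" using lsc_scale 1(1) r by blast
    fix x
    have "\<bar>a * u x\<bar> = \<bar>a\<bar> * \<bar>u x\<bar>" by (simp add: abs_mult)
    also have "\<dots> \<le> r * \<bar>u x\<bar>" unfolding r_def by (intro mult_right_mono) auto
    also have "\<dots> \<le> r * F x" using 1(2) r by (intro mult_left_mono) auto
    finally show "\<bar>a * u x\<bar> \<le> r * F x" .
  qed
  also have "\<dots> \<le> ereal (r * A)" using cl_scale[OF r] 1(3) by simp
  also have "\<dots> < ereal (r * e)" using 1(4) r by simp
  finally show ?thesis unfolding r_def .
qed

lemma ce_mono: "(\<And>x. \<bar>u x\<bar> \<le> \<bar>v x\<bar>) \<Longrightarrow> ce u \<le> ce v"
  unfolding cap_ext_def by (rule INF_superset_mono) (auto intro: order_trans)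

lemma ce_sym: "ce (\<lambda>x. u x - v x) = ce (\<lambda>x. v x - u x)"
  using ce_mono[of "\<lambda>x. u x - v x" "\<lambda>x. v x - u x"] ce_mono[of "\<lambda>x. v x - u x" "\<lambda>x. u x - v x"]
  by (simp add: abs_minus_commute)

lemma ce_L: assumes "f \<in> L" shows "ce f = ereal (c f)"
proof (rule antisym)
  have "ce f \<le> cl (\<lambda>x. \<bar>f x\<bar>)" by (rule ce_le) (auto intro: lsc_L assms)
  also have "\<dots> \<le> ereal (c f)" unfolding cap_lsc_def
    by (rule SUP_least) (auto intro!: c_mono assms)
  finally show "ce f \<le> ereal (c f)" .
next
  show "ereal (c f) \<le> ce f" unfolding cap_ext_def
  proof (rule INF_greatest)
    fix F assume "F \<in> {F. lsc F \<and> (\<forall>x. \<bar>f x\<bar> \<le> F x)}"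
    then have "ereal (c (\<lambda>x. \<bar>f x\<bar>)) \<le> cl F" by (intro cl_upper L_abs assms) auto
    then show "ereal (c f) \<le> cl F" using c_abs by simp
  qed
qed


abbreviation D where "D \<equiv> L1_carrier L c"

lemma D_approx: "g \<in> D \<Longrightarrow> e > 0 \<Longrightarrow> \<exists>f\<in>L. ce (\<lambda>x. g x - f x) < ereal e"
  unfolding L1_carrier_def by blast

lemma D_intro: assumes "\<And>e. e > 0 \<Longrightarrow> \<exists>f\<in>L. ce (\<lambda>x. g x - f x) < ereal e" shows "g \<in> D"
proof -
  obtain f where f: "f \<in> L" "ce (\<lambda>x. g x - f x) < ereal 1" using assms[of 1] by auto
  have "ce f < ereal (c f + 1)" using ce_L[OF f(1)] by simp
  then have "ce (\<lambda>x. (g x - f x) + f x) < ereal (1 + (c f + 1))" using ce_add[OF f(2)] by blast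
  then have "ce g < \<infinity>" using less_trans by fastforce
  then show ?thesis unfolding L1_carrier_def using assms by blast
qed

lemma ce_zero: "ce (\<lambda>x. 0) = 0" using ce_L[OF L_const[of 0]] c_zero by (simp add: zero_ereal_def)

lemma L_D: "f \<in> L \<Longrightarrow> f \<in> D"
  by (rule D_intro) (auto intro!: bexI[of _ f] simp: ce_zero zero_ereal_def)

lemma D_add: assumes "g \<in> D" "h \<in> D" shows "(\<lambda>x. g x + h x) \<in> D"
proof (rule D_intro)
  fix e :: real assume e: "e > 0"
  obtain f where f: "f \<in> L" "ce (\<lambda>x. g x - f x) < ereal (e/2)" using D_approx[OF assms(1)] e by (meson half_gt_zero)
  obtain k where k: "k \<in> L" "ce (\<lambda>x. h x - k x) < ereal (e/2)" using D_approx[OF assms(2)] e by (meson half_gt_zero)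
  have "ce (\<lambda>x. (g x - f x) + (h x - k x)) < ereal (e/2 + e/2)" by (rule ce_add[OF f(2) k(2)])
  moreover have "(\<lambda>x. (g x - f x) + (h x - k x)) = (\<lambda>x. (g x + h x) - (f x + k x))" by (auto simp: fun_eq_iff)
  ultimately show "\<exists>f\<in>L. ce (\<lambda>x. g x + h x - f x) < ereal e" using f k by (intro bexI[of _ "\<lambda>x. f x + k x"] L_add) auto
qed

lemma D_scal: assumes "g \<in> D" shows "(\<lambda>x. a * g x) \<in> D"
proof (rule D_intro)
  fix e :: real assume e: "e > 0"
  define e' where "e' = e / (\<bar>a\<bar> + 1)"
  have e': "e' > 0" "(\<bar>a\<bar> + 1) * e' = e" unfolding e'_def using e by (auto simp: field_simps)
  obtain f where f: "f \<in> L" "ce (\<lambda>x. g x - f x) < ereal e'" using D_approx[OF assms(1) e'(1)] by blast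
  have "ce (\<lambda>x. a * (g x - f x)) < ereal e" using ce_scale[OF f(2), of a] e'(2) by simp
  moreover have "(\<lambda>x. a * (g x - f x)) = (\<lambda>x. a * g x - a * f x)" by (auto simp: fun_eq_iff algebra_simps)
  ultimately show "\<exists>f\<in>L. ce (\<lambda>x. a * g x - f x) < ereal e" using f by (intro bexI[of _ "\<lambda>x. a * f x"] L_scal) auto
qed

lemma D_addc: "g \<in> D \<Longrightarrow> (\<lambda>x. g x + a) \<in> D"
  using D_add[of g "\<lambda>x. a"] L_D[OF L_const] by simp

lemma D_diff: "g \<in> D \<Longrightarrow> h \<in> D \<Longrightarrow> (\<lambda>x. g x - h x) \<in> D"
  using D_add[of g "\<lambda>x. (-1) * h x"] D_scal[of h "-1"] by simp


lemma rho_lip1: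
  assumes crm: "convex_risk_measure L pw_nonneg rh" and le: "\<forall>X\<in>L. rh X \<le> r1 X"
    and X: "X \<in> L" and Y: "Y \<in> L"
  shows "rh X \<le> rh Y + c (\<lambda>x. X x - Y x)"
proof -
  have rm: "monotone_rm L pw_nonneg rh" and rc: "convex_rm L rh"
    using crm unfolding convex_risk_measure_def by auto
  define \<phi> where "\<phi> s = rh (\<lambda>x. s * Y x)" for s
  have conv: "convex_on UNIV \<phi>"
  proof (rule convex_onI)
    fix t x y :: real assume t: "t > 0" "t < 1"
    have "rh (\<lambda>z. (1 - t) * (x * Y z) + (1 - (1 - t)) * (y * Y z)) \<le> (1 - t) * rh (\<lambda>z. x * Y z) + (1 - (1 - t)) * rh (\<lambda>z. y * Y z)"
    proof -
      have xL: "(\<lambda>z. x * Y z) \<in> L" and yL: "(\<lambda>z. y * Y z) \<in> L" using L_scal[OF Y] by auto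
      have AA: "\<forall>t'. 0 \<le> t' \<and> t' \<le> 1 \<longrightarrow> rh (\<lambda>z. t' * (x * Y z) + (1 - t') * (y * Y z)) \<le> t' * rh (\<lambda>z. x * Y z) + (1 - t') * rh (\<lambda>z. y * Y z)"
        using bspec[OF bspec[OF rc[unfolded convex_rm_def] xL] yL] by simp
      have "rh (\<lambda>z. (1 - t) * (x * Y z) + (1 - (1 - t)) * (y * Y z)) \<le> (1 - t) * rh (\<lambda>z. x * Y z) + (1 - (1 - t)) * rh (\<lambda>z. y * Y z)"
        using t by (intro mp[OF spec[OF AA, of "1 - t"]]) simp
      then show ?thesis by simp
    qed
    moreover have "(\<lambda>z. (1 - t) * (x * Y z) + (1 - (1 - t)) * (y * Y z)) = (\<lambda>z. ((1 - t) *\<^sub>R x + t *\<^sub>R y) * Y z)"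
      by (auto simp: fun_eq_iff algebra_simps)
    ultimately show "\<phi> ((1 - t) *\<^sub>R x + t *\<^sub>R y) \<le> (1 - t) * \<phi> x + t * \<phi> y" unfolding \<phi>_def by simp
  qed simp
  have cont: "isCont \<phi> 1"
    using convex_on_continuous[OF open_UNIV conv] continuous_on_eq_continuous_at[OF open_UNIV] by blast
  define Dd where "Dd = (\<lambda>z. X z - Y z)"
  have DdL: "Dd \<in> L" unfolding Dd_def using X Y by (rule L_diff)
  have key: "rh X \<le> t * \<phi> (1 / t) + c Dd" if t: "0 < t" "t < 1" for t
  proof -
    have "X = (\<lambda>z. t * ((1 / t) * Y z) + (1 - t) * ((1 / (1 - t)) * Dd z))"
      using t unfolding Dd_def by (auto simp: fun_eq_iff field_simps)
    then have "rh X \<le> t * rh (\<lambda>z. (1 / t) * Y z) + (1 - t) * rh (\<lambda>z. (1 / (1 - t)) * Dd z)"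
    proof -
      have AA: "\<forall>t'. 0 \<le> t' \<and> t' \<le> 1 \<longrightarrow> rh (\<lambda>z. t' * ((1 / t) * Y z) + (1 - t') * ((1 / (1 - t)) * Dd z))
          \<le> t' * rh (\<lambda>z. (1 / t) * Y z) + (1 - t') * rh (\<lambda>z. (1 / (1 - t)) * Dd z)"
        using bspec[OF bspec[OF rc[unfolded convex_rm_def] L_scal[OF Y, of "1/t"]] L_scal[OF DdL, of "1/(1-t)"]] by simp
      have "rh (\<lambda>z. t * ((1 / t) * Y z) + (1 - t) * ((1 / (1 - t)) * Dd z))
          \<le> t * rh (\<lambda>z. (1 / t) * Y z) + (1 - t) * rh (\<lambda>z. (1 / (1 - t)) * Dd z)"
        using t by (intro mp[OF spec[OF AA, of t]]) simp
      then show ?thesis using \<open>X = _\<close> by simp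
    qed
    moreover have "rh (\<lambda>z. (1 / (1 - t)) * Dd z) \<le> (1 / (1 - t)) * c Dd"
    proof -
      have "rh (\<lambda>z. (1 / (1 - t)) * Dd z) \<le> r1 (\<lambda>z. (1 / (1 - t)) * Dd z)" using le L_scal[OF DdL] by blast
      also have "\<dots> \<le> r1 (\<lambda>z. (1 / (1 - t)) * (- \<bar>Dd z\<bar>))"
      proof -
        have s1: "(\<lambda>z. (1 / (1 - t)) * Dd z) \<in> L" by (rule L_scal[OF DdL])
        have s2: "(\<lambda>z. (1 / (1 - t)) * (- \<bar>Dd z\<bar>)) \<in> L" by (rule L_scal[OF L_nabs[OF DdL]])
        have m: "(1 / (1 - t)) * (- \<bar>Dd z\<bar>) \<le> (1 / (1 - t)) * Dd z" for z
          using t by (intro mult_left_mono) auto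
        show ?thesis by (rule r1_mono[OF s2 s1 m])
      qed
      also have "\<dots> = (1 / (1 - t)) * c Dd" unfolding c_L using t by (intro r1_homog L_nabs DdL) simp
      finally show ?thesis .
    qed
    then have "(1 - t) * rh (\<lambda>z. (1 / (1 - t)) * Dd z) \<le> c Dd"
      using t by (simp add: field_simps)
    ultimately show ?thesis unfolding \<phi>_def by linarith
  qed
  define tt where "tt n = 1 - 1 / (real n + 2)" for n
  have tt: "0 < tt n" "tt n < 1" for n unfolding tt_def by (auto simp: field_simps)
  have ttlim: "tt \<longlonglongrightarrow> 1"
  proof -
    have "(\<lambda>n. 1 / (real n + 2)) \<longlonglongrightarrow> 0"
    proof -
      have "(\<lambda>n. 1 / real (Suc (Suc n))) \<longlonglongrightarrow> 0"
        using LIMSEQ_inverse_real_of_nat[unfolded inverse_eq_divide] by (rule LIMSEQ_Suc)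
      then show ?thesis by (simp add: add.commute)
    qed
    from tendsto_diff[OF tendsto_const[of 1] this] show ?thesis unfolding tt_def by simp
  qed
  have d: "(\<lambda>n. 1 / tt n) \<longlonglongrightarrow> 1" using tendsto_divide[OF tendsto_const ttlim, of 1] by simp
  have p: "(\<lambda>n. \<phi> (1 / tt n)) \<longlonglongrightarrow> \<phi> 1" by (rule isCont_tendsto_compose[OF cont d])
  have lim: "(\<lambda>n. tt n * \<phi> (1 / tt n) + c Dd) \<longlonglongrightarrow> 1 * \<phi> 1 + c Dd"
    by (intro tendsto_add tendsto_mult ttlim p tendsto_const)
  have "rh X \<le> 1 * \<phi> 1 + c Dd"
  proof (rule LIMSEQ_le_const[OF lim], intro exI allI impI)
    fix n show "rh X \<le> tt n * \<phi> (1 / tt n) + c Dd" using key[OF tt(1)[of n] tt(2)[of n]] .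
  qed
  then show ?thesis unfolding \<phi>_def Dd_def by simp
qed

lemma rho_lip:
  assumes crm: "convex_risk_measure L pw_nonneg rh" and le: "\<forall>X\<in>L. rh X \<le> r1 X"
    and X: "X \<in> L" and Y: "Y \<in> L"
  shows "\<bar>rh X - rh Y\<bar> \<le> c (\<lambda>x. X x - Y x)"
  using rho_lip1[OF crm le X Y] rho_lip1[OF crm le Y X] c_minus[of X Y] by auto

end

locale LSP = LS +
  fixes P :: "('a \<Rightarrow> real) \<Rightarrow> real"
  assumes Plip: "X \<in> L \<Longrightarrow> Y \<in> L \<Longrightarrow> \<bar>P X - P Y\<bar> \<le> c (\<lambda>x. X x - Y x)"
begin

abbreviation E where "E \<equiv> ext_fun L c P"

lemma ce_L_lt: "f \<in> L \<Longrightarrow> ce f < ereal e \<Longrightarrow> c f < e" using ce_L by simp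

lemma Plip2: "X \<in> L \<Longrightarrow> Y \<in> L \<Longrightarrow> ce (\<lambda>x. X x - Y x) < ereal e \<Longrightarrow> \<bar>P X - P Y\<bar> < e"
  using Plip[of X Y] ce_L_lt[of "\<lambda>x. X x - Y x" e] L_diff by fastforce

lemma ap: assumes "g \<in> D" shows "approx_seq L c g n \<in> L" "ce (\<lambda>x. g x - approx_seq L c g n x) < ereal (1 / real (Suc n))"
proof -
  have "\<exists>f. f \<in> L \<and> ce (\<lambda>x. g x - f x) < ereal (1 / real (Suc n))"
    using D_approx[OF assms, of "1 / real (Suc n)"] by auto
  then have "approx_seq L c g n \<in> L \<and> ce (\<lambda>x. g x - approx_seq L c g n x) < ereal (1 / real (Suc n))"
    unfolding approx_seq_def by (rule someI_ex)
  then show "approx_seq L c g n \<in> L" "ce (\<lambda>x. g x - approx_seq L c g n x) < ereal (1 / real (Suc n))" by auto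
qed

lemma close_tri: assumes "ce (\<lambda>x. g x - f x) < ereal e1" "ce (\<lambda>x. g x - k x) < ereal e2"
  shows "ce (\<lambda>x. k x - f x) < ereal (e2 + e1)"
proof -
  have "ce (\<lambda>x. k x - g x) < ereal e2" using assms(2) ce_sym by metis
  then have "ce (\<lambda>x. (k x - g x) + (g x - f x)) < ereal (e2 + e1)" using ce_add assms(1) by blast
  then show ?thesis by simp
qed

lemma ap_close: assumes "g \<in> D" "f \<in> L" "ce (\<lambda>x. g x - f x) < ereal e"
  shows "\<bar>P (approx_seq L c g n) - P f\<bar> < 1 / real (Suc n) + e"
  using Plip2[OF ap(1)[OF assms(1)] assms(2) close_tri[OF assms(3) ap(2)[OF assms(1)]]] .

lemma conv: assumes "g \<in> D" shows "(\<lambda>n. P (approx_seq L c g n)) \<longlonglongrightarrow> E g"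
proof -
  have "Cauchy (\<lambda>n. P (approx_seq L c g n))"
    unfolding Cauchy_def
  proof (intro allI impI)
    fix e :: real assume e: "e > 0"
    obtain N :: nat where N: "2 / e < real N" using reals_Archimedean2 by blast
    then have N0: "N > 0" using e by (metis divide_pos_pos less_trans of_nat_0_less_iff zero_less_numeral)
    have "2 / real N < e" using N e N0 by (simp add: field_simps)
    show "\<exists>M. \<forall>m\<ge>M. \<forall>n\<ge>M. dist (P (approx_seq L c g m)) (P (approx_seq L c g n)) < e"
    proof (intro exI allI impI)
      fix m n assume mn: "N \<le> m" "N \<le> n"
      have "\<bar>P (approx_seq L c g m) - P (approx_seq L c g n)\<bar> < 1 / real (Suc m) + 1 / real (Suc n)"
        using ap_close[OF assms ap(1)[OF assms] ap(2)[OF assms]] by blast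
      also have "1 / real (Suc m) \<le> 1 / real N" using mn N0 by (intro divide_left_mono) auto
      also have "1 / real (Suc n) \<le> 1 / real N" using mn N0 by (intro divide_left_mono) auto
      finally show "dist (P (approx_seq L c g m)) (P (approx_seq L c g n)) < e"
        using \<open>2 / real N < e\<close> by (simp add: dist_real_def)
    qed
  qed
  then show ?thesis unfolding ext_fun_def by (simp add: Cauchy_convergent_iff convergent_LIMSEQ_iff)
qed

lemma E_close: assumes "g \<in> D" "f \<in> L" "ce (\<lambda>x. g x - f x) < ereal e"
  shows "\<bar>E g - P f\<bar> \<le> e"
proof -
  have "(\<lambda>n. \<bar>P (approx_seq L c g n) - P f\<bar>) \<longlonglongrightarrow> \<bar>E g - P f\<bar>"
    using conv[OF assms(1)] by (intro tendsto_intros)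
  moreover have "(\<lambda>n. 1 / real (Suc n) + e) \<longlonglongrightarrow> 0 + e"
    by (intro tendsto_intros LIMSEQ_inverse_real_of_nat[unfolded inverse_eq_divide])
  ultimately show ?thesis
    using ap_close[OF assms] by (intro LIMSEQ_le) (auto intro: less_imp_le)
qed


lemma E_L: assumes "f \<in> L" shows "E f = P f"
proof -
  have "\<bar>E f - P f\<bar> \<le> e" if "e > 0" for e
    using E_close[OF L_D[OF assms] assms, of e] that by (simp add: ce_zero zero_ereal_def)
  then have "E f - P f = 0" by (rule eps_zero)
  then show ?thesis by simp
qed

lemma approx2: assumes "g \<in> D" "e > 0" obtains f where "f \<in> L" "ce (\<lambda>x. g x - f x) < ereal e" "\<bar>E g - P f\<bar> \<le> e"
  using D_approx[OF assms] E_close[OF assms(1)] by blast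

lemma E_lip: assumes "g \<in> D" "h \<in> D" "ce (\<lambda>x. h x - g x) < ereal d" shows "\<bar>E h - E g\<bar> \<le> d"
proof -
  have H: "\<bar>E h - E g\<bar> \<le> d + 2 * e" if e: "e > 0" for e
  proof -
    obtain f where f: "f \<in> L" "ce (\<lambda>x. g x - f x) < ereal e" "\<bar>E g - P f\<bar> \<le> e" using approx2[OF assms(1) e] by blast
    have "ce (\<lambda>x. (h x - g x) + (g x - f x)) < ereal (d + e)" using ce_add[OF assms(3) f(2)] .
    then have "ce (\<lambda>x. h x - f x) < ereal (d + e)" by simp
    then have "\<bar>E h - P f\<bar> \<le> d + e" using E_close[OF assms(2) f(1)] by blast
    then show ?thesis using f(3) by linarith
  qed
  have "\<bar>E h - E g\<bar> \<le> d + e" if "e > 0" for e using H[of "e/2"] that by simp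
  then show ?thesis by (rule eps_le)
qed

lemma E_cont: "L1_continuous L c E"
  unfolding L1_continuous_def
proof (intro ballI allI impI)
  fix g e assume g: "g \<in> D" and e: "(e::real) > 0"
  show "\<exists>d>0. \<forall>h\<in>D. ce (\<lambda>x. h x - g x) < ereal d \<longrightarrow> \<bar>E h - E g\<bar> < e"
  proof (intro exI[of _ "e/2"] conjI ballI impI)
    fix h assume "h \<in> D" "ce (\<lambda>x. h x - g x) < ereal (e/2)"
    then have "\<bar>E h - E g\<bar> \<le> e/2" using E_lip[OF g] by blast
    then show "\<bar>E h - E g\<bar> < e" using e by simp
  qed (use e in simp)
qed

lemma E_unique: assumes "\<forall>X\<in>L. R' X = P X" "L1_continuous L c R'" "g \<in> D" shows "R' g = E g"
proof -
  have H: "\<bar>R' g - E g\<bar> \<le> 2 * e" if e: "e > 0" for e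
  proof -
    obtain d where d: "d > 0" "\<forall>h\<in>D. ce (\<lambda>x. h x - g x) < ereal d \<longrightarrow> \<bar>R' h - R' g\<bar> < e"
      using assms(2,3) e unfolding L1_continuous_def by blast
    obtain f where f: "f \<in> L" "ce (\<lambda>x. g x - f x) < ereal (min d e)" "\<bar>E g - P f\<bar> \<le> min d e"
      using approx2[OF assms(3), of "min d e"] d e by auto
    have "ereal (min d e) \<le> ereal d" by simp
    then have "ce (\<lambda>x. g x - f x) < ereal d" using f(2) by (rule order.strict_trans2[rotated])
    then have "ce (\<lambda>x. f x - g x) < ereal d" using ce_sym[of g f] by simp
    then have "\<bar>R' f - R' g\<bar> < e" using d L_D[OF f(1)] by blast
    then show ?thesis using f(3) assms(1) f(1) by auto
  qed
  have "\<bar>R' g - E g\<bar> \<le> e" if "e > 0" for e using H[of "e/2"] that by simp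
  then have "R' g - E g = 0" by (rule eps_zero)
  then show ?thesis by simp
qed


lemma E_mono: assumes Pm: "monotone_rm L pw_nonneg P" shows "monotone_rm D (L1_nonneg L c) E"
  unfolding monotone_rm_def
proof (intro ballI impI)
  fix X Y assume X: "X \<in> D" and Y: "Y \<in> D" and nn: "L1_nonneg L c (\<lambda>x. Y x - X x)"
  obtain fs where fs: "\<forall>n. fs n \<in> L \<and> pw_nonneg (fs n)"
    "(\<lambda>n. ce (\<lambda>x. (Y x - X x) - fs n x)) \<longlonglongrightarrow> 0"
    using nn unfolding L1_nonneg_def by auto
  have H: "E Y \<le> E X + 3 * e" if e: "e > 0" for e
  proof -
    have "eventually (\<lambda>n. ce (\<lambda>x. (Y x - X x) - fs n x) < ereal e) sequentially"
      using fs(2) e by (intro order_tendstoD(2)) (auto simp: zero_ereal_def)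
    then obtain n where n: "ce (\<lambda>x. (Y x - X x) - fs n x) < ereal e"
      using eventually_sequentially by auto
    obtain f where f: "f \<in> L" "ce (\<lambda>x. X x - f x) < ereal e" "\<bar>E X - P f\<bar> \<le> e"
      using approx2[OF X e] by blast
    have "ce (\<lambda>x. ((Y x - X x) - fs n x) + (X x - f x)) < ereal (e + e)" using ce_add[OF n f(2)] .
    moreover have "(\<lambda>x. ((Y x - X x) - fs n x) + (X x - f x)) = (\<lambda>x. Y x - (f x + fs n x))" by (auto simp: fun_eq_iff)
    ultimately have c2: "ce (\<lambda>x. Y x - (f x + fs n x)) < ereal (e + e)" by simp
    have fL: "(\<lambda>x. f x + fs n x) \<in> L" using f(1) fs(1) by (intro L_add) auto
    have "\<bar>E Y - P (\<lambda>x. f x + fs n x)\<bar> \<le> e + e" using E_close[OF Y fL] c2 by simp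
    moreover have "P (\<lambda>x. f x + fs n x) \<le> P f"
      using Pm f(1) fL fs(1) unfolding monotone_rm_def pw_nonneg_def by auto
    ultimately show ?thesis using f(3) by linarith
  qed
  have "E Y \<le> E X + e" if "e > 0" for e using H[of "e/3"] that by simp
  then show "E Y \<le> E X" by (rule eps_le)
qed

lemma E_transl: assumes Pt: "transl_inv L P" shows "transl_inv D E"
  unfolding transl_inv_def
proof (intro ballI allI)
  fix X a assume X: "X \<in> D"
  have H: "\<bar>E (\<lambda>x. X x + a) - (E X - a)\<bar> \<le> 2 * e" if e: "e > 0" for e
  proof -
    obtain f where f: "f \<in> L" "ce (\<lambda>x. X x - f x) < ereal e" "\<bar>E X - P f\<bar> \<le> e"
      using approx2[OF X e] by blast
    have "ce (\<lambda>x. (X x + a) - (f x + a)) < ereal e" using f(2) by simp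
    then have "\<bar>E (\<lambda>x. X x + a) - P (\<lambda>x. f x + a)\<bar> \<le> e" using E_close[OF D_addc[OF X] L_addc[OF f(1)]] by blast
    moreover have "P (\<lambda>x. f x + a) = P f - a" using Pt f(1) unfolding transl_inv_def by blast
    ultimately show ?thesis using f(3) by linarith
  qed
  have "\<bar>E (\<lambda>x. X x + a) - (E X - a)\<bar> \<le> e" if "e > 0" for e using H[of "e/2"] that by simp
  then have "E (\<lambda>x. X x + a) - (E X - a) = 0" by (rule eps_zero)
  then show "E (\<lambda>x. X x + a) = E X - a" by simp
qed

lemma E_homog: assumes Ph: "pos_homogeneous L P" shows "pos_homogeneous D E"
  unfolding pos_homogeneous_def
proof (intro ballI allI impI)
  fix X and t :: real assume X: "X \<in> D" and t: "t > 0"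
  have H: "\<bar>E (\<lambda>x. t * X x) - t * E X\<bar> \<le> (2 * t + 1) * e" if e: "e > 0" for e
  proof -
    obtain f where f: "f \<in> L" "ce (\<lambda>x. X x - f x) < ereal e" "\<bar>E X - P f\<bar> \<le> e"
      using approx2[OF X e] by blast
    have "ce (\<lambda>x. t * (X x - f x)) < ereal ((\<bar>t\<bar> + 1) * e)" by (rule ce_scale[OF f(2)])
    then have "ce (\<lambda>x. t * X x - t * f x) < ereal ((t + 1) * e)" using t by (simp add: algebra_simps)
    then have 1: "\<bar>E (\<lambda>x. t * X x) - P (\<lambda>x. t * f x)\<bar> \<le> (t + 1) * e"
      using E_close[OF D_scal[OF X] L_scal[OF f(1)]] by blast
    have 2: "P (\<lambda>x. t * f x) = t * P f" using Ph f(1) t unfolding pos_homogeneous_def by blast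
    have 3: "\<bar>t * E X - t * P f\<bar> \<le> t * e" using f(3) t
      by (metis abs_mult abs_of_pos mult_left_mono less_imp_le right_diff_distrib)
    have "\<bar>E (\<lambda>x. t * X x) - t * E X\<bar> \<le> (t + 1) * e + t * e" using 1 2 3 by linarith
    then show ?thesis by (simp add: algebra_simps)
  qed
  have "\<bar>E (\<lambda>x. t * X x) - t * E X\<bar> \<le> e" if "e > 0" for e
    using H[of "e / (2 * t + 1)"] that t by simp
  then have "E (\<lambda>x. t * X x) - t * E X = 0" by (rule eps_zero)
  then show "E (\<lambda>x. t * X x) = t * E X" by simp
qed

lemma E_convex: assumes Pc: "convex_rm L P" shows "convex_rm D E"
  unfolding convex_rm_def
proof (intro ballI allI impI)
  fix X Y and t :: real assume X: "X \<in> D" and Y: "Y \<in> D" and t: "0 \<le> t \<and> t \<le> 1"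
  have H: "E (\<lambda>x. t * X x + (1 - t) * Y x) \<le> t * E X + (1 - t) * E Y + 4 * e" if e: "e > 0" for e
  proof -
    obtain f where f: "f \<in> L" "ce (\<lambda>x. X x - f x) < ereal e" "\<bar>E X - P f\<bar> \<le> e"
      using approx2[OF X e] by blast
    obtain k where k: "k \<in> L" "ce (\<lambda>x. Y x - k x) < ereal e" "\<bar>E Y - P k\<bar> \<le> e"
      using approx2[OF Y e] by blast
    have a1: "ce (\<lambda>x. t * (X x - f x)) < ereal ((\<bar>t\<bar> + 1) * e)" by (rule ce_scale[OF f(2)])
    have a2: "ce (\<lambda>x. (1 - t) * (Y x - k x)) < ereal ((\<bar>1 - t\<bar> + 1) * e)" by (rule ce_scale[OF k(2)])
    have "ce (\<lambda>x. t * (X x - f x) + (1 - t) * (Y x - k x)) < ereal ((\<bar>t\<bar> + 1) * e + (\<bar>1 - t\<bar> + 1) * e)"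
      by (rule ce_add[OF a1 a2])
    moreover have "(\<bar>t\<bar> + 1) * e + (\<bar>1 - t\<bar> + 1) * e = 3 * e" using t by (simp add: algebra_simps)
    moreover have "(\<lambda>x. t * (X x - f x) + (1 - t) * (Y x - k x)) =
        (\<lambda>x. (t * X x + (1 - t) * Y x) - (t * f x + (1 - t) * k x))" by (auto simp: fun_eq_iff algebra_simps)
    ultimately have c3: "ce (\<lambda>x. (t * X x + (1 - t) * Y x) - (t * f x + (1 - t) * k x)) < ereal (3 * e)" by simp
    have ZD: "(\<lambda>x. t * X x + (1 - t) * Y x) \<in> D" using D_add[OF D_scal[OF X] D_scal[OF Y]] .
    have cL: "(\<lambda>x. t * f x + (1 - t) * k x) \<in> L" using L_add[OF L_scal[OF f(1)] L_scal[OF k(1)]] .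
    have 1: "E (\<lambda>x. t * X x + (1 - t) * Y x) \<le> P (\<lambda>x. t * f x + (1 - t) * k x) + 3 * e"
      using E_close[OF ZD cL c3] by linarith
    have 2: "P (\<lambda>x. t * f x + (1 - t) * k x) \<le> t * P f + (1 - t) * P k"
      using Pc f(1) k(1) t unfolding convex_rm_def by blast
    have 3: "t * P f \<le> t * (E X + e)" using f(3) t by (intro mult_left_mono) auto
    have 4: "(1 - t) * P k \<le> (1 - t) * (E Y + e)" using k(3) t by (intro mult_left_mono) auto
    have "t * (E X + e) + (1 - t) * (E Y + e) = t * E X + (1 - t) * E Y + e" by (simp add: algebra_simps)
    then show ?thesis using 1 2 3 4 by linarith
  qed
  have "E (\<lambda>x. t * X x + (1 - t) * Y x) \<le> t * E X + (1 - t) * E Y + e" if "e > 0" for e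
    using H[of "e/4"] that by simp
  then show "E (\<lambda>x. t * X x + (1 - t) * Y x) \<le> t * E X + (1 - t) * E Y" by (rule eps_le)
qed

end

context LS begin
lemma ext_le:
  assumes lipP: "\<And>X Y. X \<in> L \<Longrightarrow> Y \<in> L \<Longrightarrow> \<bar>P X - P Y\<bar> \<le> c (\<lambda>x. X x - Y x)"
    and lipQ: "\<And>X Y. X \<in> L \<Longrightarrow> Y \<in> L \<Longrightarrow> \<bar>Q X - Q Y\<bar> \<le> c (\<lambda>x. X x - Y x)"
    and PQ: "\<forall>X\<in>L. P X \<le> Q X" and g: "g \<in> D"
  shows "ext_fun L c P g \<le> ext_fun L c Q g"
proof -
  have p: "LSP L r1 c B P" by unfold_locales (rule lipP)
  have q: "LSP L r1 c B Q" by unfold_locales (rule lipQ)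
  have "ext_fun L c P g \<le> ext_fun L c Q g + e" if e: "e > 0" for e
  proof -
    obtain f where f: "f \<in> L" "ce (\<lambda>x. g x - f x) < ereal (e/2)" using D_approx[OF g] e by (meson half_gt_zero)
    have "\<bar>ext_fun L c P g - P f\<bar> \<le> e/2" using LSP.E_close[OF p g f(1) f(2)] .
    moreover have "\<bar>ext_fun L c Q g - Q f\<bar> \<le> e/2" using LSP.E_close[OF q g f(1) f(2)] .
    moreover have "P f \<le> Q f" using PQ f(1) by blast
    ultimately show ?thesis by linarith
  qed
  then show ?thesis by (rule eps_le)
qed

lemma main_LS:
  assumes rho_crm: "convex_risk_measure L pw_nonneg rh"
    and rho_norm: "rh (const_fun 0) = 0"
    and le: "\<forall>X\<in>L. rh X \<le> r1 X"
  shows "capacity L c \<and>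
    (\<exists>R1. (\<forall>X\<in>L. R1 X = r1 X) \<and> L1_continuous L c R1 \<and>
          sublinear_risk_measure (L1_carrier L c) (L1_nonneg L c) R1 \<and>
          (\<forall>R'. (\<forall>X\<in>L. R' X = r1 X) \<and> L1_continuous L c R' \<longrightarrow>
                (\<forall>g\<in>L1_carrier L c. R' g = R1 g)) \<and>
     (\<exists>R. (\<forall>X\<in>L. R X = rh X) \<and> L1_continuous L c R \<and>
          convex_risk_measure (L1_carrier L c) (L1_nonneg L c) R \<and>
          R (const_fun 0) = 0 \<and>
          (\<forall>g\<in>L1_carrier L c. R g \<le> R1 g) \<and>
          (\<forall>R'. (\<forall>X\<in>L. R' X = rh X) \<and> L1_continuous L c R' \<longrightarrow>
                (\<forall>g\<in>L1_carrier L c. R' g = R g))))"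
proof -
  have lip1: "\<bar>r1 X - r1 Y\<bar> \<le> c (\<lambda>x. X x - Y x)" if "X \<in> L" "Y \<in> L" for X Y
    using r1_lip that by blast
  have lip: "\<bar>rh X - rh Y\<bar> \<le> c (\<lambda>x. X x - Y x)" if "X \<in> L" "Y \<in> L" for X Y
    using rho_lip[OF rho_crm le that] .
  have p1: "LSP L r1 c B r1" by unfold_locales (rule lip1)
  have p: "LSP L r1 c B rh" by unfold_locales (rule lip)
  have s1: "monotone_rm L pw_nonneg r1" "convex_rm L r1" "transl_inv L r1" "pos_homogeneous L r1"
    using rho1_sl unfolding sublinear_risk_measure_def convex_risk_measure_def by auto
  have s0: "monotone_rm L pw_nonneg rh" "convex_rm L rh" "transl_inv L rh"
    using rho_crm unfolding convex_risk_measure_def by auto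
  have c0: "const_fun 0 \<in> L" using Lconst by blast
  define R1 where "R1 = ext_fun L c r1"
  define R where "R = ext_fun L c rh"
  have a1: "\<forall>X\<in>L. R1 X = r1 X" unfolding R1_def using LSP.E_L[OF p1] by blast
  have a2: "L1_continuous L c R1" unfolding R1_def by (rule LSP.E_cont[OF p1])
  have a3: "sublinear_risk_measure (L1_carrier L c) (L1_nonneg L c) R1"
    unfolding sublinear_risk_measure_def convex_risk_measure_def R1_def
    using LSP.E_mono[OF p1 s1(1)] LSP.E_convex[OF p1 s1(2)] LSP.E_transl[OF p1 s1(3)] LSP.E_homog[OF p1 s1(4)] by blast
  have a4: "\<forall>R'. (\<forall>X\<in>L. R' X = r1 X) \<and> L1_continuous L c R' \<longrightarrow> (\<forall>g\<in>L1_carrier L c. R' g = R1 g)"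
    unfolding R1_def using LSP.E_unique[OF p1] by blast
  have b1: "\<forall>X\<in>L. R X = rh X" unfolding R_def using LSP.E_L[OF p] by blast
  have b2: "L1_continuous L c R" unfolding R_def by (rule LSP.E_cont[OF p])
  have b3: "convex_risk_measure (L1_carrier L c) (L1_nonneg L c) R"
    unfolding convex_risk_measure_def R_def
    using LSP.E_mono[OF p s0(1)] LSP.E_convex[OF p s0(2)] LSP.E_transl[OF p s0(3)] by blast
  have b4: "R (const_fun 0) = 0" unfolding R_def using LSP.E_L[OF p c0] rho_norm by simp
  have b5: "\<forall>g\<in>L1_carrier L c. R g \<le> R1 g" unfolding R_def R1_def using ext_le[OF lip lip1 le] by blast
  have b6: "\<forall>R'. (\<forall>X\<in>L. R' X = rh X) \<and> L1_continuous L c R' \<longrightarrow> (\<forall>g\<in>L1_carrier L c. R' g = R g)"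
    unfolding R_def using LSP.E_unique[OF p] by blast
  show ?thesis using capacity_c a1 a2 a3 a4 b1 b2 b3 b4 b5 b6 by blast
qed
end

theorem lemma5p5:
  fixes L :: "('a::topological_space \<Rightarrow> real) set"
    and \<rho> \<rho>1 :: "('a \<Rightarrow> real) \<Rightarrow> real"
  assumes metr: "metrizable_space (euclidean :: 'a topology)"
    and sep: "separable_space (euclidean :: 'a topology)"
    and Lcb: "\<forall>f\<in>L. bounded_cont f"
    and Ladd: "\<forall>f\<in>L. \<forall>g\<in>L. (\<lambda>x. f x + g x) \<in> L"
    and Lscal: "\<forall>f\<in>L. \<forall>a::real. (\<lambda>x. a * f x) \<in> L"
    and Lsup: "\<forall>f\<in>L. \<forall>g\<in>L. (\<lambda>x. max (f x) (g x)) \<in> L"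
    and Lconst: "\<forall>a::real. const_fun a \<in> L"
    and Lgen: "(euclidean :: 'a topology) = topology_generated_by {f -` U | f U. f \<in> L \<and> open U}"
    and rho_crm: "convex_risk_measure L pw_nonneg \<rho>"
    and rho_norm: "\<rho> (const_fun 0) = 0"
    and rho_ur: "uniformly_regular L \<rho>"
    and rho1_sl: "sublinear_risk_measure L pw_nonneg \<rho>1"
    and rho1_reg: "regular_rm L \<rho>1"
    and le: "\<forall>X\<in>L. \<rho> X \<le> \<rho>1 X"
  defines "c \<equiv> (\<lambda>X. \<rho>1 (\<lambda>x. - \<bar>X x\<bar>))"
  shows "capacity L c \<and>
    (\<exists>R1. (\<forall>X\<in>L. R1 X = \<rho>1 X) \<and> L1_continuous L c R1 \<and>
          sublinear_risk_measure (L1_carrier L c) (L1_nonneg L c) R1 \<and>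
          (\<forall>R'. (\<forall>X\<in>L. R' X = \<rho>1 X) \<and> L1_continuous L c R' \<longrightarrow>
                (\<forall>g\<in>L1_carrier L c. R' g = R1 g)) \<and>
     (\<exists>R. (\<forall>X\<in>L. R X = \<rho> X) \<and> L1_continuous L c R \<and>
          convex_risk_measure (L1_carrier L c) (L1_nonneg L c) R \<and>
          R (const_fun 0) = 0 \<and>
          (\<forall>g\<in>L1_carrier L c. R g \<le> R1 g) \<and>
          (\<forall>R'. (\<forall>X\<in>L. R' X = \<rho> X) \<and> L1_continuous L c R' \<longrightarrow>
                (\<forall>g\<in>L1_carrier L c. R' g = R g))))"
proof -
  from sep_metr_base[OF metr sep] obtain B :: "'a set set" where
    BB: "countable B \<and> (\<forall>V\<in>B. open V) \<and> (\<forall>U x. open U \<longrightarrow> x \<in> U \<longrightarrow> (\<exists>V\<in>B. x \<in> V \<and> V \<subseteq> U))" ..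
  have B: "countable B" "\<forall>V\<in>B. open V" "\<forall>U x. open U \<longrightarrow> x \<in> U \<longrightarrow> (\<exists>V\<in>B. x \<in> V \<and> V \<subseteq> U)"
    using BB by auto
  have ls: "LS L \<rho>1 c B"
    apply unfold_locales
    apply (fact Lcb)
    apply (fact Ladd)
    apply (fact Lscal)
    apply (fact Lsup)
    apply (fact Lconst)
    apply (fact Lgen)
    apply (fact rho1_sl)
    apply (fact rho1_reg)
    apply (simp add: c_def)
    apply (fact B(1))
    using B(2) apply blast
    using B(3) apply blast
    done
  show ?thesis by (rule LS.main_LS[OF ls rho_crm rho_norm le])
qed

end
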